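(* Let $x,y\in\mathbb R^d$, let $\mathsf D\in\{\mathsf{KL},\mathsf R_q\}$, and let $\Phi_{x,y}:\mathbb R^d\to\mathbb R^d$ be a map such that $\tilde q_{T,h}(x,v)=q_T(y,\Phi_{x,y}(v))$ for all $v\in\mathbb R^d$. Suppose $f\in C^2$ with $\|\nabla^2f(z)\|_{op}\le L$ for all $z$, $T>0$ satisfies $LT^2\le\frac25\pi^2$, and $h\ge0$. Then \[ \mathsf D(\delta_x\tilde{\mathrm P}_{T,h}\,\|\,\delta_y\mathrm P_T)\le\mathsf D\big((\Phi_{x,y})_\#\boldsymbol\gamma_d\,\|\,\boldsymbol\gamma_d\big). \]
   Context: $f:\mathbb R^d\to\mathbb R$. $q_t(x,v)$ is the position at time $t$ of the solution of $\dot x_t=v_t,\dot v_t=-\nabla f(x_t)$ with $(x_0,v_0)=(x,v)$. For $h>0$ with $T/h\in\mathbb N$ (always assumed), $\tilde q_{T,h}(x,v)=x_N$, $N=T/h$, where $x_0=x,v_0=v$, $x_{j+1}=x_j+hv_j-\frac{h^2}2\nabla f(x_j)$, $v_{j+1}=v_j-\frac h2(\nabla f(x_j)+\nabla f(x_{j+1}))$; $\tilde q_{T,0}=q_T$. $\boldsymbol\gamma_d=\mathcal N(0,I_d)$. $\tilde{\mathrm P}_{T,h}$ (resp. $\mathrm P_T$) maps $\rho$ to the law of $\tilde q_{T,h}(X,\xi)$ (resp. $q_T(X,\xi)$), $X\sim\rho$, $\xi\sim\boldsymbol\gamma_d$ independent; $\delta_x$ is the Dirac mass. $\mathsf{KL}(\mu\|\pi)=\mathbb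 E_\mu[\log\frac{d\mu}{d\pi}]$, and for $1<q<\infty$, $\mathsf R_q(\mu\|\pi)=\frac1{q-1}\log\mathbb E_\pi[(d\mu/d\pi)^q]$, both $+\infty$ if $\mu\not\ll\pi$. $\psi_\#\rho$ is the pushforward. *)

theory Defs
  imports "HOL-Analysis.Analysis"
begin

text \<open>Position at time t of the exact Hamiltonian flow of
  x' = v, v' = - G x (G plays the role of the gradient of f), started at (x,v).\<close>
definition ham_flow_pos :: "('a::euclidean_space \<Rightarrow> 'a) \<Rightarrow> real \<Rightarrow> 'a \<Rightarrow> 'a \<Rightarrow> 'a" where
  "ham_flow_pos G t x v =
     (SOME X. \<exists>V. X 0 = x \<and> V 0 = v \<and>
        (\<forall>s. (X has_vector_derivative V s) (at s) \<and>
             (V has_vector_derivative - G (X s)) (at s))) t"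

definition lf_step :: "('a::euclidean_space \<Rightarrow> 'a) \<Rightarrow> real \<Rightarrow> 'a \<times> 'a \<Rightarrow> 'a \<times> 'a" where
  "lf_step G h p =
     (let x = fst p; v = snd p; x' = x + h *\<^sub>R v - (h^2/2) *\<^sub>R G x
      in (x', v - (h/2) *\<^sub>R (G x + G x')))"

text \<open>tilde q_{T,h}: N = T/h leapfrog steps for h > 0, and the exact flow for h = 0.\<close>
definition leapfrog_pos :: "('a::euclidean_space \<Rightarrow> 'a) \<Rightarrow> real \<Rightarrow> real \<Rightarrow> 'a \<Rightarrow> 'a \<Rightarrow> 'a" where
  "leapfrog_pos G T h x v =
     (if h = 0 then ham_flow_pos G T x v
      else fst ((lf_step G h ^^ nat \<lfloor>T / h\<rfloor>) (x, v)))"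

definition std_gaussian :: "'a::euclidean_space measure" where
  "std_gaussian = density lborel
     (\<lambda>x. ennreal ((2 * pi) powr (- real DIM('a) / 2) * exp (- ((norm x)\<^sup>2) / 2)))"

definition KL_div :: "'a measure \<Rightarrow> 'a measure \<Rightarrow> ereal" where
  "KL_div \<mu> \<pi> =
     (if absolutely_continuous \<pi> \<mu> then
        (if integrable \<mu> (\<lambda>z. ln (enn2real (RN_deriv \<pi> \<mu> z)))
         then ereal (\<integral>z. ln (enn2real (RN_deriv \<pi> \<mu> z)) \<partial>\<mu>)
         else \<infinity>)
      else \<infinity>)"

definition renyi_div :: "real \<Rightarrow> 'a measure \<Rightarrow> 'a measure \<Rightarrow> ereal" where
  "renyi_div q \<mu> \<pi> =
     (if absolutely_continuous \<pi> \<mu> then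
        (let I = (\<integral>\<^sup>+ z. ennreal ((enn2real (RN_deriv \<pi> \<mu> z)) powr q) \<partial>\<pi>)
         in if I = \<infinity> then \<infinity> else ereal (ln (enn2real I) / (q - 1)))
      else \<infinity>)"

end

theory Submission
  imports Defs "HOL-Probability.Probability"
begin

lemma gauss_1d: "(\<integral>\<^sup>+t. ennreal (exp (- (t\<^sup>2) / 2)) \<partial>lborel) = ennreal (sqrt (2 * pi))"
proof -
  have "(\<integral>\<^sup>+t. ennreal (exp (- (t\<^sup>2) / 2)) \<partial>lborel)
      = (\<integral>\<^sup>+t. ennreal (sqrt (2 * pi)) * ennreal (normal_density 0 (1::real) t) \<partial>lborel)"
    by (intro nn_integral_cong) (simp add: normal_density_def ennreal_mult[symmetric])
  also have "\<dots> = ennreal (sqrt (2 * pi)) * (\<integral>\<^sup>+t. ennreal (normal_density 0 (1::real) t) \<partial>lborel)"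
    by (rule nn_integral_cmult) simp
  also have "(\<integral>\<^sup>+t. ennreal (normal_density 0 (1::real) t) \<partial>lborel) = 1"
  proof -
    interpret prob_space "density lborel (normal_density 0 (1::real))" by (rule prob_space_normal_density) simp
    show ?thesis using emeasure_space_1 by (simp add: emeasure_density)
  qed
  finally show ?thesis by simp
qed

lemma std_gaussian_finite: "finite_measure (std_gaussian :: 'a::euclidean_space measure)"
proof (rule finite_measureI)
  let ?c = "(2 * pi) powr (- real DIM('a) / 2)"
  have "emeasure (std_gaussian :: 'a measure) (space std_gaussian)
      = (\<integral>\<^sup>+x. ennreal (?c * exp (- ((norm (x::'a))\<^sup>2) / 2)) \<partial>lborel)"
    unfolding std_gaussian_def by (simp add: emeasure_density)
  also have "\<dots> = (\<integral>\<^sup>+x. ennreal ?c * (\<Prod>b\<in>Basis. ennreal (exp (- (((x::'a) \<bullet> b)\<^sup>2) / 2))) \<partial>lborel)"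
  proof (rule nn_integral_cong)
    fix x :: 'a
    have "(norm x)\<^sup>2 = (\<Sum>b\<in>Basis. (x \<bullet> b)\<^sup>2)"
      unfolding power2_norm_eq_inner by (subst euclidean_inner) (simp add: power2_eq_square)
    then have "exp (- ((norm x)\<^sup>2) / 2) = (\<Prod>b\<in>Basis. exp (- ((x \<bullet> b)\<^sup>2) / 2))"
      by (simp add: exp_sum[symmetric] sum_divide_distrib[symmetric] sum_negf)
    then show "ennreal (?c * exp (- ((norm x)\<^sup>2) / 2)) = ennreal ?c * (\<Prod>b\<in>Basis. ennreal (exp (- ((x \<bullet> b)\<^sup>2) / 2)))"
      by (simp, subst ennreal_mult) (auto intro: prod_nonneg simp: prod_ennreal)
  qed
  also have "\<dots> = ennreal ?c * (\<integral>\<^sup>+x. (\<Prod>b\<in>Basis. ennreal (exp (- (((x::'a) \<bullet> b)\<^sup>2) / 2))) \<partial>lborel)"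
    by (rule nn_integral_cmult) measurable
  also have "(\<integral>\<^sup>+x. (\<Prod>b\<in>Basis. ennreal (exp (- ((x \<bullet> b)\<^sup>2) / 2))) \<partial>(lborel :: 'a measure))
      = (\<Prod>b\<in>(Basis :: 'a set). (\<integral>\<^sup>+t. ennreal (exp (- (t\<^sup>2) / 2)) \<partial>lborel))"
  proof (rule nn_integral_lborel_prod)
    have "(\<lambda>t::real. exp (- (t\<^sup>2) / 2)) \<in> borel_measurable borel"
      by (intro borel_measurable_continuous_onI continuous_intros) auto
    then show "(\<lambda>t::real. ennreal (exp (- (t\<^sup>2) / 2))) \<in> borel_measurable borel" for b :: 'a
      using measurable_compose[OF _ measurable_ennreal] by blast
  qed simp
  also have "\<dots> = ennreal (sqrt (2 * pi)) ^ DIM('a)" by (simp only: gauss_1d) simp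
  finally show "emeasure (std_gaussian :: 'a measure) (space std_gaussian) \<noteq> \<infinity>"
    by (simp add: ennreal_mult_eq_top_iff power_eq_top_ennreal)
qed

lemma sets_std_gaussian[simp]: "sets (std_gaussian :: 'a::euclidean_space measure) = sets borel"
  unfolding std_gaussian_def by simp


lemma AE_RN_pos_fin:
  assumes finM: "finite_measure M" and finN: "finite_measure N"
    and setsN: "sets N = sets M" and ac: "absolutely_continuous M N"
  shows "AE z in N. 0 < RN_deriv M N z \<and> RN_deriv M N z < \<infinity>"
proof -
  interpret M: finite_measure M by fact
  interpret N: finite_measure N by fact
  have "AE z in M. RN_deriv M N z \<noteq> \<infinity>"
    by (rule M.RN_deriv_finite[OF _ ac setsN]) unfold_locales
  then have 1: "AE z in N. RN_deriv M N z \<noteq> \<infinity>"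
    by (rule absolutely_continuous_AE[OF setsN ac])
  have "AE z in density M (RN_deriv M N). 0 < RN_deriv M N z"
    by (subst AE_density) auto
  then have 2: "AE z in N. 0 < RN_deriv M N z"
    using M.density_RN_deriv[OF ac setsN] by metis
  show ?thesis using 1 2 by eventually_elim (auto simp: less_top)
qed

lemma t_neg_ln_le: "(t::real) \<ge> 0 \<Longrightarrow> t * max 0 (- ln t) \<le> 1"
proof (cases "t = 0")
  case False
  assume t: "t \<ge> 0"
  then have tp: "t > 0" using False by simp
  have "ln (1/t) \<le> 1/t - 1" using tp by (intro ln_le_minus_one) simp
  then have "- ln t \<le> 1/t - 1" using tp by (simp add: ln_div)
  then have "t * (- ln t) \<le> t * (1/t - 1)" using tp by (intro mult_left_mono) auto
  also have "\<dots> = 1 - t" using tp by (simp add: field_simps)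
  finally show ?thesis using tp by (auto simp: max_def)
qed simp


lemma young_q:
  fixes q x c :: real
  assumes q: "q > 1" and x: "x \<ge> 0" and c: "c \<ge> 0"
  shows "q * (c powr (q - 1) * x) \<le> x powr q + (q - 1) * c powr q"
proof -
  define p' where "p' = q / (q - 1)"
  have p': "p' > 1" "1 / q + 1 / p' = 1" using q by (auto simp: p'_def field_simps)
  have "x * c powr (q - 1) \<le> x powr q / q + (c powr (q - 1)) powr p' / p'"
    by (rule Youngs_inequality) (use q p' x c in auto)
  also have "(c powr (q - 1)) powr p' = c powr q"
    using q c by (simp add: powr_powr p'_def)
  finally have "x * c powr (q - 1) \<le> x powr q / q + c powr q / p'" .
  then have "q * (x * c powr (q - 1)) \<le> q * (x powr q / q + c powr q / p')"
    using q by (intro mult_left_mono) auto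
  also have "\<dots> = x powr q + (q - 1) * c powr q" using q by (simp add: p'_def field_simps)
  finally show ?thesis by (simp add: mult.commute)
qed

context
  fixes M N :: "'a measure" and B :: "'b measure" and \<psi> :: "'a \<Rightarrow> 'b"
  assumes finM: "finite_measure M" and finN: "finite_measure N"
    and setsN: "sets N = sets M" and psi[measurable]: "\<psi> \<in> M \<rightarrow>\<^sub>M B"
begin

lemma psiN[measurable]: "\<psi> \<in> N \<rightarrow>\<^sub>M B"
  using psi setsN measurable_cong_sets by blast

lemma spaceN: "space N = space M"
  using setsN sets_eq_imp_space_eq by blast

lemma ac_distr:
  assumes ac: "absolutely_continuous M N"
  shows "absolutely_continuous (distr M B \<psi>) (distr N B \<psi>)"
  unfolding absolutely_continuous_def
proof
  fix A assume A: "A \<in> null_sets (distr M B \<psi>)"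
  then have As: "A \<in> sets B" and "emeasure M (\<psi> -` A \<inter> space M) = 0"
    by (auto simp: null_sets_def emeasure_distr)
  moreover have "\<psi> -` A \<inter> space M \<in> sets M" using As psi by measurable
  ultimately have "\<psi> -` A \<inter> space M \<in> null_sets M"
    by (simp add: null_setsI)
  then have "\<psi> -` A \<inter> space M \<in> null_sets N"
    using ac unfolding absolutely_continuous_def by auto
  then show "A \<in> null_sets (distr N B \<psi>)"
    using As by (auto simp: null_sets_def emeasure_distr spaceN)
qed

lemma key:
  assumes ac: "absolutely_continuous M N" and h[measurable]: "h \<in> borel_measurable B"
  shows "(\<integral>\<^sup>+z. h (\<psi> z) * RN_deriv M N z \<partial>M)
       = (\<integral>\<^sup>+z. h (\<psi> z) * RN_deriv (distr M B \<psi>) (distr N B \<psi>) (\<psi> z) \<partial>M)"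
proof -
  interpret M: finite_measure M by (rule finM)
  interpret M': finite_measure "distr M B \<psi>" by (rule M.finite_measure_distr) (rule psi)
  have "(\<integral>\<^sup>+z. h (\<psi> z) * RN_deriv M N z \<partial>M) = (\<integral>\<^sup>+z. h (\<psi> z) \<partial>N)"
    using M.RN_deriv_nn_integral[OF ac setsN, of "\<lambda>z. h (\<psi> z)"] by (simp add: mult.commute)
  also have "\<dots> = (\<integral>\<^sup>+w. h w \<partial>distr N B \<psi>)"
    by (simp add: nn_integral_distr)
  also have "\<dots> = (\<integral>\<^sup>+w. RN_deriv (distr M B \<psi>) (distr N B \<psi>) w * h w \<partial>distr M B \<psi>)"
    by (rule M'.RN_deriv_nn_integral[OF ac_distr[OF ac]]) auto
  also have "\<dots> = (\<integral>\<^sup>+z. h (\<psi> z) * RN_deriv (distr M B \<psi>) (distr N B \<psi>) (\<psi> z) \<partial>M)"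
    by (simp add: nn_integral_distr mult.commute)
  finally show ?thesis .
qed

lemma KL_dpi: "KL_div (distr N B \<psi>) (distr M B \<psi>) \<le> KL_div N M"
proof (cases "absolutely_continuous M N \<and> integrable N (\<lambda>z. ln (enn2real (RN_deriv M N z)))")
  case False
  then have "KL_div N M = \<infinity>" unfolding KL_div_def by auto
  then show ?thesis by simp
next
  case True
  then have ac: "absolutely_continuous M N"
    and int_a: "integrable N (\<lambda>z. ln (enn2real (RN_deriv M N z)))" by auto
  interpret M: finite_measure M by (rule finM)
  interpret N: finite_measure N by (rule finN)
  interpret M': finite_measure "distr M B \<psi>" by (rule M.finite_measure_distr) (rule psi)
  interpret N': finite_measure "distr N B \<psi>" by (rule N.finite_measure_distr) (rule psiN)
  define g where "g = RN_deriv M N"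
  define g' where "g' = RN_deriv (distr M B \<psi>) (distr N B \<psi>)"
  define a where "a z = enn2real (g z)" for z
  define b where "b z = enn2real (g' (\<psi> z))" for z
  have gm: "g \<in> borel_measurable M" unfolding g_def by (rule borel_measurable_RN_deriv)
  have gmN[measurable]: "g \<in> borel_measurable N"
    using gm by (simp only: measurable_cong_sets[OF setsN refl])
  have g'm[measurable]: "g' \<in> borel_measurable B"
    unfolding g'_def using borel_measurable_RN_deriv[of "distr M B \<psi>" "distr N B \<psi>"]
    by (simp only: measurable_cong_sets[OF sets_distr refl])
  have am[measurable]: "a \<in> borel_measurable N" unfolding a_def[abs_def] by measurable
  have bm[measurable]: "b \<in> borel_measurable N" unfolding b_def[abs_def] by measurable
  have amM[measurable]: "a \<in> borel_measurable M" using am by (simp only: measurable_cong_sets[OF setsN refl])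
  have bmM[measurable]: "b \<in> borel_measurable M" using bm by (simp only: measurable_cong_sets[OF setsN refl])
  have ac': "absolutely_continuous (distr M B \<psi>) (distr N B \<psi>)" by (rule ac_distr[OF ac])
  have AEg: "AE z in N. 0 < g z \<and> g z < \<infinity>"
    unfolding g_def by (rule AE_RN_pos_fin[OF finM finN setsN ac])
  have "AE w in distr N B \<psi>. 0 < g' w \<and> g' w < \<infinity>"
    unfolding g'_def by (rule AE_RN_pos_fin[OF M'.finite_measure_axioms N'.finite_measure_axioms _ ac']) simp
  then have AEg': "AE z in N. 0 < g' (\<psi> z) \<and> g' (\<psi> z) < \<infinity>"
    by (subst (asm) AE_distr_iff[OF psiN]) auto
  have AEab: "AE z in N. 0 < a z \<and> 0 < b z"
    using AEg AEg' by eventually_elim (auto simp: a_def b_def enn2real_positive_iff)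
  have ptw: "AE z in N. ln (b z) \<le> ln (a z) - 1 + b z / a z"
    using AEab
  proof eventually_elim
    case (elim z)
    then have "ln (b z / a z) \<le> b z / a z - 1" by (intro ln_le_minus_one) auto
    then show ?case using elim by (simp add: ln_div)
  qed
  have gfinM: "AE z in M. g z \<noteq> \<infinity>"
    unfolding g_def by (rule M.RN_deriv_finite[OF _ ac setsN]) unfold_locales
  have totN: "(\<integral>\<^sup>+z. g' (\<psi> z) \<partial>M) = emeasure N (space N)"
  proof -
    have "(\<integral>\<^sup>+z. g' (\<psi> z) \<partial>M) = (\<integral>\<^sup>+z. (\<lambda>_. 1) (\<psi> z) * g' (\<psi> z) \<partial>M)" by simp
    also have "\<dots> = (\<integral>\<^sup>+z. (\<lambda>_. 1) (\<psi> z) * g z \<partial>M)"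
      unfolding g_def g'_def by (rule key[OF ac, symmetric]) simp
    also have "\<dots> = (\<integral>\<^sup>+z. 1 \<partial>N)"
      using M.RN_deriv_nn_integral[OF ac setsN, of "\<lambda>_. 1"] by (simp add: g_def)
    finally show ?thesis by simp
  qed
  have ratio: "(\<integral>\<^sup>+z. ennreal (b z / a z) \<partial>N) \<le> emeasure N (space N)"
  proof -
    have "(\<integral>\<^sup>+z. ennreal (b z / a z) \<partial>N) = (\<integral>\<^sup>+z. g z * ennreal (b z / a z) \<partial>M)"
      unfolding g_def by (rule M.RN_deriv_nn_integral[OF ac setsN]) measurable
    also have "\<dots> \<le> (\<integral>\<^sup>+z. g' (\<psi> z) \<partial>M)"
    proof (rule nn_integral_mono_AE)
      show "AE z in M. g z * ennreal (b z / a z) \<le> g' (\<psi> z)"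
        using gfinM
      proof eventually_elim
        case (elim z)
        show ?case
        proof (cases "g z = 0")
          case False
          then have "a z > 0" using elim by (auto simp: a_def enn2real_positive_iff less_top zero_less_iff_neq_zero)
          moreover have "g z = ennreal (a z)" using elim by (simp add: a_def less_top)
          ultimately have "g z * ennreal (b z / a z) = ennreal (b z)"
            by (simp add: ennreal_mult[symmetric] b_def)
          also have "\<dots> \<le> g' (\<psi> z)" unfolding b_def
            by (cases "g' (\<psi> z) = \<infinity>") (auto simp: less_top)
          finally show ?thesis .
        qed simp
      qed
    qed
    finally show ?thesis using totN by simp
  qed
  have int_ratio: "integrable N (\<lambda>z. b z / a z)"
  proof (rule integrableI_bounded)
    have "(\<integral>\<^sup>+z. ennreal (norm (b z / a z)) \<partial>N) = (\<integral>\<^sup>+z. ennreal (b z / a z) \<partial>N)"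
      by (intro nn_integral_cong) (auto simp: a_def b_def)
    then show "(\<integral>\<^sup>+z. ennreal (norm (b z / a z)) \<partial>N) < \<infinity>"
      using le_less_trans[OF ratio less_top[THEN iffD1, OF N.emeasure_finite]] by simp
  qed measurable
  define h where "h w = ennreal (max 0 (- ln (enn2real (g' w))))" for w
  have hm[measurable]: "h \<in> borel_measurable B" unfolding h_def[abs_def] by measurable
  have int_neg: "integrable N (\<lambda>z. max 0 (- ln (b z)))"
  proof (rule integrableI_bounded)
    have "(\<integral>\<^sup>+z. ennreal (norm (max 0 (- ln (b z)))) \<partial>N) = (\<integral>\<^sup>+z. h (\<psi> z) \<partial>N)"
      by (intro nn_integral_cong) (auto simp: h_def b_def)
    also have "\<dots> = (\<integral>\<^sup>+z. h (\<psi> z) * g z \<partial>M)"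
      using M.RN_deriv_nn_integral[OF ac setsN, of "\<lambda>z. h (\<psi> z)"] by (simp add: g_def mult.commute)
    also have "\<dots> = (\<integral>\<^sup>+z. h (\<psi> z) * g' (\<psi> z) \<partial>M)"
      unfolding g_def g'_def by (rule key[OF ac hm])
    also have "\<dots> \<le> (\<integral>\<^sup>+z. 1 \<partial>M)"
    proof (rule nn_integral_mono)
      fix z
      show "h (\<psi> z) * g' (\<psi> z) \<le> 1"
      proof (cases "g' (\<psi> z) = \<infinity>")
        case True then show ?thesis by (simp add: h_def)
      next
        case False
        define t where "t = enn2real (g' (\<psi> z))"
        have t: "g' (\<psi> z) = ennreal t" "t \<ge> 0"
          using False by (auto simp: t_def less_top)
        have "h (\<psi> z) * g' (\<psi> z) = ennreal (max 0 (- ln t) * t)"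
        proof -
          have "enn2real (g' (\<psi> z)) = t" using t by simp
          then show ?thesis unfolding h_def t(1)
            by (simp only:) (rule ennreal_mult[symmetric], simp_all add: t(2))
        qed
        also have "\<dots> \<le> 1" using t_neg_ln_le[OF t(2)] by (simp add: mult.commute)
        finally show ?thesis .
      qed
    qed
    also have "\<dots> < \<infinity>" using less_top[THEN iffD1, OF M.emeasure_finite[of "space M"]] by simp
    finally show "(\<integral>\<^sup>+z. ennreal (norm (max 0 (- ln (b z)))) \<partial>N) < \<infinity>" .
  qed measurable
  have int_a': "integrable N (\<lambda>z. ln (a z))" using int_a by (simp add: a_def g_def)
  have int_bd: "integrable N (\<lambda>z. \<bar>ln (a z)\<bar> + b z / a z + max 0 (- ln (b z)))"
    using int_a' int_ratio int_neg by auto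
  have int_b: "integrable N (\<lambda>z. ln (b z))"
  proof (rule Bochner_Integration.integrable_bound[OF int_bd])
    show "AE z in N. norm (ln (b z)) \<le> norm (\<bar>ln (a z)\<bar> + b z / a z + max 0 (- ln (b z)))"
      using ptw AEab
    proof eventually_elim
      case (elim z)
      have r: "b z / a z \<ge> 0" using elim by auto
      have ar: "\<And>u v r::real. u \<le> v - 1 + r \<Longrightarrow> r \<ge> 0 \<Longrightarrow> \<bar>u\<bar> \<le> \<bar>v\<bar> + r + max 0 (- u) \<and> 0 \<le> \<bar>v\<bar> + r + max 0 (- u)"
        by arith
      show ?case using ar[OF elim(1) r] by simp
    qed
  qed measurable
  have lhs_int: "integrable (distr N B \<psi>) (\<lambda>w. ln (enn2real (g' w)))"
    using int_b by (subst integrable_distr_eq[OF psiN]) (auto simp: b_def)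
  have lhs_eq: "(\<integral>w. ln (enn2real (g' w)) \<partial>distr N B \<psi>) = (\<integral>z. ln (b z) \<partial>N)"
    by (subst integral_distr[OF psiN]) (auto simp: b_def)
  have "(\<integral>z. ln (b z) \<partial>N) \<le> (\<integral>z. ln (a z) - 1 + b z / a z \<partial>N)"
    by (rule integral_mono_AE[OF int_b _ ptw]) (use int_a' int_ratio in auto)
  also have "\<dots> = (\<integral>z. ln (a z) \<partial>N) - measure N (space N) + (\<integral>z. b z / a z \<partial>N)"
    using int_a' int_ratio by simp
  also have "(\<integral>z. b z / a z \<partial>N) \<le> measure N (space N)"
  proof -
    have "(\<integral>z. b z / a z \<partial>N) = enn2real (\<integral>\<^sup>+z. ennreal (b z / a z) \<partial>N)"
      by (rule integral_eq_nn_integral) (auto simp: a_def b_def)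
    also have "\<dots> \<le> enn2real (emeasure N (space N))"
      using ratio less_top[THEN iffD1, OF N.emeasure_finite[of "space N"]] by (intro enn2real_mono) auto
    finally show ?thesis by (simp add: measure_def)
  qed
  finally have ineq: "(\<integral>z. ln (b z) \<partial>N) \<le> (\<integral>z. ln (a z) \<partial>N)" by simp
  show ?thesis
    using ac' lhs_int lhs_eq ineq True
    by (simp add: KL_div_def g'_def a_def g_def)
qed

lemma renyi_dpi:
  assumes q: "q > 1"
  shows "renyi_div q (distr N B \<psi>) (distr M B \<psi>) \<le> renyi_div q N M"
proof (cases "absolutely_continuous M N")
  case False
  then have "renyi_div q N M = \<infinity>" unfolding renyi_div_def by auto
  then show ?thesis by simp
next
  case True
  note ac = True
  interpret M: finite_measure M by (rule finM)
  interpret N: finite_measure N by (rule finN)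
  interpret M': finite_measure "distr M B \<psi>" by (rule M.finite_measure_distr) (rule psi)
  interpret N': finite_measure "distr N B \<psi>" by (rule N.finite_measure_distr) (rule psiN)
  define g where "g = RN_deriv M N"
  define g' where "g' = RN_deriv (distr M B \<psi>) (distr N B \<psi>)"
  define a where "a z = enn2real (g z)" for z
  define b where "b z = enn2real (g' (\<psi> z))" for z
  have gm[measurable]: "g \<in> borel_measurable M" unfolding g_def by (rule borel_measurable_RN_deriv)
  have g'm[measurable]: "g' \<in> borel_measurable B"
    unfolding g'_def using borel_measurable_RN_deriv[of "distr M B \<psi>" "distr N B \<psi>"]
    by (simp only: measurable_cong_sets[OF sets_distr refl])
  have am[measurable]: "a \<in> borel_measurable M" unfolding a_def[abs_def] by measurable
  have bm[measurable]: "b \<in> borel_measurable M" unfolding b_def[abs_def] by measurable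
  have ac': "absolutely_continuous (distr M B \<psi>) (distr N B \<psi>)" by (rule ac_distr[OF ac])
  have gfinM: "AE z in M. g z \<noteq> \<infinity>"
    unfolding g_def by (rule M.RN_deriv_finite[OF _ ac setsN]) unfold_locales
  have "AE w in distr M B \<psi>. g' w \<noteq> \<infinity>"
    unfolding g'_def by (rule M'.RN_deriv_finite[OF _ ac']) (unfold_locales, simp)
  then have g'finM: "AE z in M. g' (\<psi> z) \<noteq> \<infinity>"
    by (subst (asm) AE_distr_iff[OF psi]) auto
  define I where "I = (\<integral>\<^sup>+z. ennreal (a z powr q) \<partial>M)"
  define I' where "I' = (\<integral>\<^sup>+z. ennreal (b z powr q) \<partial>M)"
  have I'_eq: "(\<integral>\<^sup>+w. ennreal (enn2real (g' w) powr q) \<partial>distr M B \<psi>) = I'"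
    unfolding I'_def b_def by (subst nn_integral_distr[OF psi]) auto
  define c where "c n z = min (b z) (real n)" for n :: nat and z
  have cm[measurable]: "c n \<in> borel_measurable M" for n unfolding c_def[abs_def] by measurable
  define C where "C n = (\<integral>\<^sup>+z. ennreal (c n z powr q) \<partial>M)" for n
  have C_le: "C n \<le> I" for n
  proof -
    have c0: "c n z \<ge> 0" for z by (simp add: c_def b_def)
    have Cfin: "C n < \<infinity>"
    proof -
      have "C n \<le> (\<integral>\<^sup>+z. ennreal (real n powr q) \<partial>M)"
        unfolding C_def using c0 q
        by (intro nn_integral_mono ennreal_leI powr_mono2) (auto simp: c_def)
      also have "\<dots> < \<infinity>"
        using less_top[THEN iffD1, OF M.emeasure_finite[of "space M"]]
        by (simp add: ennreal_mult_less_top)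
      finally show ?thesis .
    qed
    define hh where "hh w = ennreal (min (enn2real (g' w)) (real n) powr (q - 1))" for w
    have hhm[measurable]: "hh \<in> borel_measurable B" unfolding hh_def[abs_def] by measurable
    have "ennreal q * C n \<le> ennreal q * (\<integral>\<^sup>+z. hh (\<psi> z) * g' (\<psi> z) \<partial>M)"
    proof -
      have "C n \<le> (\<integral>\<^sup>+z. hh (\<psi> z) * g' (\<psi> z) \<partial>M)"
        unfolding C_def
      proof (rule nn_integral_mono)
        fix z
        have "ennreal (c n z powr q) = ennreal (c n z powr (q - 1)) * ennreal (c n z)"
        proof (cases "c n z = 0")
          case False
          have "c n z powr (q - 1) * c n z powr 1 = c n z powr (q - 1 + 1)"
            by (rule powr_add[symmetric])
          then have "c n z powr q = c n z powr (q - 1) * c n z powr 1" by simp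
          then show ?thesis using c0[of z] by (simp add: ennreal_mult[symmetric])
        qed simp
        also have "\<dots> \<le> hh (\<psi> z) * g' (\<psi> z)"
        proof (rule mult_mono)
          show "ennreal (c n z powr (q - 1)) \<le> hh (\<psi> z)" by (simp add: hh_def c_def b_def)
          have "ennreal (c n z) \<le> ennreal (b z)" by (intro ennreal_leI) (simp add: c_def)
          also have "\<dots> \<le> g' (\<psi> z)" unfolding b_def
            by (cases "g' (\<psi> z) = \<infinity>") (auto simp: less_top)
          finally show "ennreal (c n z) \<le> g' (\<psi> z)" .
        qed auto
        finally show "ennreal (c n z powr q) \<le> hh (\<psi> z) * g' (\<psi> z)" .
      qed
      then show ?thesis by (rule mult_left_mono) simp
    qed
    also have "(\<integral>\<^sup>+z. hh (\<psi> z) * g' (\<psi> z) \<partial>M) = (\<integral>\<^sup>+z. hh (\<psi> z) * g z \<partial>M)"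
      unfolding g_def g'_def by (rule key[OF ac hhm, symmetric])
    also have "ennreal q * \<dots> = (\<integral>\<^sup>+z. ennreal (q * (c n z powr (q - 1) * a z)) \<partial>M)"
    proof -
      have "(\<integral>\<^sup>+z. hh (\<psi> z) * g z \<partial>M) = (\<integral>\<^sup>+z. ennreal (c n z powr (q - 1) * a z) \<partial>M)"
      proof (rule nn_integral_cong_AE)
        show "AE z in M. hh (\<psi> z) * g z = ennreal (c n z powr (q - 1) * a z)"
          using gfinM
        proof eventually_elim
          case (elim z)
          then have e: "g z = ennreal (a z)" by (simp add: a_def less_top)
          show ?case unfolding e hh_def c_def b_def by (subst ennreal_mult) (auto simp: a_def)
        qed
      qed
      also have "ennreal q * \<dots> = (\<integral>\<^sup>+z. ennreal q * ennreal (c n z powr (q - 1) * a z) \<partial>M)"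
        by (rule nn_integral_cmult[symmetric]) measurable
      also have "\<dots> = (\<integral>\<^sup>+z. ennreal (q * (c n z powr (q - 1) * a z)) \<partial>M)"
        using q by (intro nn_integral_cong) (simp add: ennreal_mult[symmetric] a_def)
      finally show ?thesis .
    qed
    also have "\<dots> \<le> (\<integral>\<^sup>+z. ennreal (a z powr q) + ennreal (q - 1) * ennreal (c n z powr q) \<partial>M)"
    proof (rule nn_integral_mono)
      fix z
      have "q * (c n z powr (q - 1) * a z) \<le> a z powr q + (q - 1) * c n z powr q"
        by (rule young_q[OF q]) (auto simp: a_def c0)
      then have "ennreal (q * (c n z powr (q - 1) * a z)) \<le> ennreal (a z powr q + (q - 1) * c n z powr q)"
        by (rule ennreal_leI)
      also have "\<dots> = ennreal (a z powr q) + ennreal (q - 1) * ennreal (c n z powr q)"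
        using q by (simp add: ennreal_plus ennreal_mult[symmetric])
      finally show "ennreal (q * (c n z powr (q - 1) * a z)) \<le> ennreal (a z powr q) + ennreal (q - 1) * ennreal (c n z powr q)" .
    qed
    also have "\<dots> = I + ennreal (q - 1) * C n"
      unfolding I_def C_def by (subst nn_integral_add) (auto simp: nn_integral_cmult)
    finally have ineq: "ennreal q * C n \<le> I + ennreal (q - 1) * C n" .
    show "C n \<le> I"
    proof (cases "I = \<infinity>")
      case False
      obtain r where r: "C n = ennreal r" "r \<ge> 0" using Cfin by (cases "C n") auto
      obtain s where s: "I = ennreal s" "s \<ge> 0" using False by (cases I) auto
      have e1: "ennreal (q * r) = ennreal q * ennreal r" using q r by (intro ennreal_mult) auto
      have e3: "ennreal ((q - 1) * r) = ennreal (q - 1) * ennreal r" using q r by (intro ennreal_mult) auto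
      have e2: "ennreal (s + (q - 1) * r) = ennreal s + ennreal ((q - 1) * r)"
        using q r s by (intro ennreal_plus) auto
      have "ennreal (q * r) \<le> ennreal (s + (q - 1) * r)"
        using ineq unfolding e1 e2 e3 r(1) s(1) .
      moreover have "0 \<le> s + (q - 1) * r" using q r s by auto
      ultimately have "q * r \<le> s + (q - 1) * r" using ennreal_le_iff by blast
      then have "r \<le> s" by (simp add: algebra_simps)
      then show ?thesis using r s by simp
    qed simp
  qed
  have I'_sup: "I' = (SUP n. C n)"
  proof -
    have "I' = (\<integral>\<^sup>+z. (SUP n. ennreal (c n z powr q)) \<partial>M)"
      unfolding I'_def
    proof (rule nn_integral_cong)
      fix z
      show "ennreal (b z powr q) = (SUP n. ennreal (c n z powr q))"
      proof (rule antisym)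
        obtain n :: nat where n: "b z \<le> real n" using real_arch_simple by blast
        then have "c n z = b z" by (simp add: c_def)
        then show "ennreal (b z powr q) \<le> (SUP n. ennreal (c n z powr q))"
          by (metis SUP_upper UNIV_I)
        show "(SUP n. ennreal (c n z powr q)) \<le> ennreal (b z powr q)"
          using q by (intro SUP_least ennreal_leI powr_mono2) (auto simp: c_def b_def)
      qed
    qed
    also have "\<dots> = (SUP n. C n)"
      unfolding C_def
    proof (rule nn_integral_monotone_convergence_SUP)
      show "incseq (\<lambda>n z. ennreal (c n z powr q))"
        using q by (intro monoI le_funI ennreal_leI powr_mono2) (auto simp: c_def b_def)
    qed measurable
    finally show ?thesis .
  qed
  have I'_le: "I' \<le> I" unfolding I'_sup by (rule SUP_least) (rule C_le)
  have I'_zero: "I = 0" if "I' = 0"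
  proof -
    have "AE z in M. ennreal (b z powr q) = 0"
      using that unfolding I'_def by (subst (asm) nn_integral_0_iff_AE) auto
    then have AEg'0: "AE z in M. g' (\<psi> z) = 0"
      using g'finM
    proof eventually_elim
      case (elim z)
      then have "b z = 0" by (simp add: b_def)
      then show ?case using elim by (simp add: b_def enn2real_eq_0_iff)
    qed
    have "(\<integral>\<^sup>+z. g z \<partial>M) = (\<integral>\<^sup>+z. g' (\<psi> z) \<partial>M)"
      using key[OF ac, of "\<lambda>_. 1"] by (simp add: g_def g'_def)
    also have "\<dots> = 0" using AEg'0 by (simp add: nn_integral_0_iff_AE)
    finally have "AE z in M. g z = 0" by (subst (asm) nn_integral_0_iff_AE) auto
    then have "AE z in M. ennreal (a z powr q) = 0"
      by eventually_elim (simp add: a_def)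
    then show "I = 0" unfolding I_def by (subst nn_integral_0_iff_AE) auto
  qed
  show ?thesis
  proof (cases "I = \<infinity>")
    case True
    then have "renyi_div q N M = \<infinity>" using ac by (simp add: renyi_div_def I_def a_def g_def Let_def)
    then show ?thesis by simp
  next
    case False
    then have I'fin: "I' \<noteq> \<infinity>" using I'_le by (auto simp: top_unique)
    have lhs: "renyi_div q (distr N B \<psi>) (distr M B \<psi>) = ereal (ln (enn2real I') / (q - 1))"
      using ac' I'fin I'_eq by (simp add: renyi_div_def g'_def Let_def)
    have rhs: "renyi_div q N M = ereal (ln (enn2real I) / (q - 1))"
      using ac False by (simp add: renyi_div_def I_def a_def g_def Let_def)
    have "ln (enn2real I') \<le> ln (enn2real I)"
    proof (cases "I' = 0")
      case True then show ?thesis using I'_zero by simp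
    next
      case False
      then have "enn2real I' > 0" using I'fin by (simp add: enn2real_positive_iff less_top zero_less_iff_neq_zero)
      moreover have "enn2real I' \<le> enn2real I" using I'_le \<open>I \<noteq> \<infinity>\<close> by (intro enn2real_mono) (auto simp: less_top)
      ultimately show ?thesis by simp
    qed
    then have "ln (enn2real I') / (q - 1) \<le> ln (enn2real I) / (q - 1)"
      using q by (intro divide_right_mono) auto
    then show ?thesis using lhs rhs by simp
  qed
qed

end








definition Jint :: "(real \<Rightarrow> 'e::banach) \<Rightarrow> real \<Rightarrow> 'e" where
  "Jint g t = integral {0..t} g - integral {t..0} g"

lemma Jint_eq:
  fixes g :: "real \<Rightarrow> 'e::banach"
  assumes g: "continuous_on UNIV g" and a: "a \<le> t" "a \<le> 0"
  shows "Jint g t = integral {a..t} g - integral {a..0} g"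
proof (cases "0 \<le> t")
  case True
  have "integral {a..0} g + integral {0..t} g = integral {a..t} g"
    by (rule Henstock_Kurzweil_Integration.integral_combine) (use a True in \<open>auto intro: integrable_continuous_interval continuous_on_subset[OF g]\<close>)
  moreover have "integral {t..0} g = 0"
  proof (cases "t = 0")
    case False then have "{t..0} = {}" using True by auto
    then show ?thesis by simp
  qed simp
  ultimately show ?thesis unfolding Jint_def by (simp add: algebra_simps)
next
  case False
  have "integral {a..t} g + integral {t..0} g = integral {a..0} g"
    by (rule Henstock_Kurzweil_Integration.integral_combine) (use a False in \<open>auto intro: integrable_continuous_interval continuous_on_subset[OF g]\<close>)
  moreover have "{0..t} = {}" using False by auto
  ultimately show ?thesis unfolding Jint_def by (simp add: algebra_simps)
qed

lemma Jint_0[simp]: "Jint g 0 = 0"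
  by (simp add: Jint_def)

lemma Jint_deriv:
  fixes g :: "real \<Rightarrow> 'e::banach"
  assumes g: "continuous_on UNIV g"
  shows "(Jint g has_vector_derivative g s) (at s)"
proof -
  define a where "a = min s 0 - 1"
  define b where "b = max s 0 + 1"
  have "((\<lambda>u. integral {a..u} g) has_vector_derivative g s) (at s within {a..b})"
    by (rule integral_has_vector_derivative) (auto intro: continuous_on_subset[OF g] simp: a_def b_def)
  moreover have "at s within {a..b} = at s" by (rule at_within_Icc_at) (auto simp: a_def b_def)
  ultimately have "((\<lambda>u. integral {a..u} g) has_vector_derivative g s) (at s)" by simp
  then have "((\<lambda>u. integral {a..u} g - integral {a..0} g) has_vector_derivative g s - 0) (at s)"
    by (intro derivative_intros)
  then have d: "((\<lambda>u. integral {a..u} g - integral {a..0} g) has_vector_derivative g s) (at s)" by simp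
  show ?thesis
  proof (rule has_vector_derivative_transform_within_open[OF d])
    show "open {a<..}" by simp
    show "s \<in> {a<..}" by (auto simp: a_def)
    fix y assume "y \<in> {a<..}"
    then show "integral {a..y} g - integral {a..0} g = Jint g y"
      by (intro Jint_eq[symmetric, OF g]) (auto simp: a_def)
  qed
qed

lemma Jint_cont:
  fixes g :: "real \<Rightarrow> 'e::banach"
  assumes g: "continuous_on UNIV g"
  shows "continuous_on UNIV (Jint g)"
  using Jint_deriv[OF g]
  by (meson continuous_at_imp_continuous_on has_vector_derivative_continuous)

lemma Jint_diff:
  fixes g h :: "real \<Rightarrow> 'e::banach"
  assumes g: "continuous_on UNIV g" and h: "continuous_on UNIV h"
  shows "Jint g t - Jint h t = Jint (\<lambda>s. g s - h s) t"
proof -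
  have ig: "g integrable_on {a..b}" "h integrable_on {a..b}" for a b
    by (auto intro: integrable_continuous_interval continuous_on_subset[OF g] continuous_on_subset[OF h])
  show ?thesis unfolding Jint_def by (simp add: integral_diff[OF ig(1) ig(2)] algebra_simps)
qed

lemma Jint_bound:
  fixes g :: "real \<Rightarrow> 'e::banach"
  assumes g: "continuous_on UNIV g" and C: "C \<ge> 0"
    and bd: "\<And>s. \<bar>s\<bar> \<le> \<bar>t\<bar> \<Longrightarrow> norm (g s) \<le> C * \<bar>s\<bar> ^ m"
  shows "norm (Jint g t) \<le> C * \<bar>t\<bar> ^ Suc m / Suc m"
proof (cases "0 \<le> t")
  case True
  have "((\<lambda>s. C * s ^ m) has_integral (C * t ^ Suc m / Suc m - C * 0 ^ Suc m / Suc m)) {0..t}"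
  proof (rule fundamental_theorem_of_calculus[OF True])
    fix x :: real assume "x \<in> {0..t}"
    show "((\<lambda>s. C * s ^ Suc m / Suc m) has_vector_derivative C * x ^ m) (at x within {0..t})"
      unfolding has_real_derivative_iff_has_vector_derivative[symmetric]
    proof -
      have "((\<lambda>s. s ^ Suc m) has_real_derivative real (Suc m) * x ^ m) (at x within {0..t})"
        using DERIV_pow[of "Suc m" x "{0..t}"] by simp
      then have "((\<lambda>s. C * s ^ Suc m / Suc m) has_real_derivative C * (real (Suc m) * x ^ m) / Suc m) (at x within {0..t})"
        by (intro DERIV_cdivide DERIV_cmult)
      then show "((\<lambda>s. C * s ^ Suc m / Suc m) has_real_derivative C * x ^ m) (at x within {0..t})"
        by (simp del: of_nat_Suc)
    qed
  qed
  then have I: "((\<lambda>s. C * s ^ m) has_integral (C * t ^ Suc m / Suc m)) {0..t}" by simp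
  have "{t..0} = {} \<or> t = 0" using True by auto
  then have "Jint g t = integral {0..t} g" unfolding Jint_def by auto
  also have "norm \<dots> \<le> integral {0..t} (\<lambda>s. C * s ^ m)"
  proof (rule Henstock_Kurzweil_Integration.integral_norm_bound_integral)
    show "g integrable_on {0..t}" by (auto intro: integrable_continuous_interval continuous_on_subset[OF g])
    show "(\<lambda>s. C * s ^ m) integrable_on {0..t}" using I by blast
    fix x assume "x \<in> {0..t}"
    then show "norm (g x) \<le> C * x ^ m" using bd[of x] True by auto
  qed
  also have "\<dots> = C * t ^ Suc m / Suc m" using I by (rule integral_unique)
  finally show ?thesis using True by simp
next
  case False
  have "((\<lambda>s. C * (- s) ^ m) has_integral (- C * (- 0) ^ Suc m / Suc m - (- C * (- t) ^ Suc m / Suc m))) {t..0}"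
  proof (rule fundamental_theorem_of_calculus)
    show "t \<le> 0" using False by simp
    fix x :: real assume "x \<in> {t..0}"
    show "((\<lambda>s. - C * (- s) ^ Suc m / Suc m) has_vector_derivative C * (- x) ^ m) (at x within {t..0})"
      unfolding has_real_derivative_iff_has_vector_derivative[symmetric]
    proof -
      have "((\<lambda>s. (- s) ^ Suc m) has_real_derivative real (Suc m) * (- x) ^ m * (- 1)) (at x within {t..0})"
        by (rule derivative_eq_intros refl)+ (simp del: of_nat_Suc)
      then have "((\<lambda>s. - C * (- s) ^ Suc m / Suc m) has_real_derivative - C * (real (Suc m) * (- x) ^ m * (- 1)) / Suc m) (at x within {t..0})"
        by (intro DERIV_cdivide DERIV_cmult)
      then show "((\<lambda>s. - C * (- s) ^ Suc m / Suc m) has_real_derivative C * (- x) ^ m) (at x within {t..0})"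
        by (simp del: of_nat_Suc)
    qed
  qed
  then have I: "((\<lambda>s. C * (- s) ^ m) has_integral (C * (- t) ^ Suc m / Suc m)) {t..0}" by simp
  have "{0..t} = {}" using False by auto
  then have "Jint g t = - integral {t..0} g" unfolding Jint_def by auto
  then have "norm (Jint g t) = norm (integral {t..0} g)" by simp
  also have "\<dots> \<le> integral {t..0} (\<lambda>s. C * (- s) ^ m)"
  proof (rule Henstock_Kurzweil_Integration.integral_norm_bound_integral)
    show "g integrable_on {t..0}" by (auto intro: integrable_continuous_interval continuous_on_subset[OF g])
    show "(\<lambda>s. C * (- s) ^ m) integrable_on {t..0}" using I by blast
    fix x assume "x \<in> {t..0}"
    then show "norm (g x) \<le> C * (- x) ^ m" using bd[of x] False by auto
  qed
  also have "\<dots> = C * (- t) ^ Suc m / Suc m" using I by (rule integral_unique)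
  finally show ?thesis using False by simp
qed

lemma lip_cont:
  fixes F :: "'e::real_normed_vector \<Rightarrow> 'f::real_normed_vector"
  assumes lip: "\<And>u v. norm (F u - F v) \<le> K * norm (u - v)" and K: "K \<ge> 0"
  shows "continuous_on UNIV F"
proof (rule continuous_at_imp_continuous_on, intro ballI)
  fix x :: 'e
  show "isCont F x"
    unfolding continuous_at_eps_delta
  proof (intro allI impI)
    fix e :: real assume e: "e > 0"
    show "\<exists>d>0. \<forall>y. dist y x < d \<longrightarrow> dist (F y) (F x) < e"
    proof (intro exI[of _ "e / (K + 1)"] conjI allI impI)
      show "e / (K + 1) > 0" using e K by simp
      fix y assume y: "dist y x < e / (K + 1)"
      have "dist (F y) (F x) \<le> K * dist y x" using lip[of y x] by (simp add: dist_norm)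
      also have "\<dots> \<le> (K + 1) * dist y x" using K by (simp add: mult_right_mono)
      also have "\<dots> < (K + 1) * (e / (K + 1))" using y K by (intro mult_strict_left_mono) auto
      also have "\<dots> = e" using K by simp
      finally show "dist (F y) (F x) < e" .
    qed
  qed
qed

lemma ode_exists:
  fixes F :: "'e::euclidean_space \<Rightarrow> 'e"
  assumes lip: "\<And>u v. norm (F u - F v) \<le> K * norm (u - v)" and K: "K \<ge> 0"
  shows "\<exists>Z. Z 0 = z0 \<and> (\<forall>s. (Z has_vector_derivative F (Z s)) (at s))"
proof -
  have Fc: "continuous_on UNIV F" by (rule lip_cont[OF lip K])
  define P where "P Y = (\<lambda>t. z0 + Jint (\<lambda>s. F (Y s)) t)" for Y :: "real \<Rightarrow> 'e"
  define Zs where "Zs n = (P ^^ n) (\<lambda>_. z0)" for n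
  have Zs0: "Zs 0 = (\<lambda>_. z0)" by (simp add: Zs_def)
  have ZsS: "Zs (Suc n) = P (Zs n)" for n by (simp add: Zs_def)
  have compc: "continuous_on UNIV (\<lambda>s. F (Y s))" if "continuous_on UNIV Y" for Y :: "real \<Rightarrow> 'e"
    using continuous_on_compose2[OF Fc that] by simp
  have cont: "continuous_on UNIV (Zs n)" for n
  proof (induction n)
    case 0 then show ?case by (simp add: Zs0)
  next
    case (Suc n)
    show ?case unfolding ZsS P_def
      by (intro continuous_intros Jint_cont compc Suc)
  qed
  define D where "D n t = Zs (Suc n) t - Zs n t" for n t
  define M where "M = norm (F z0)"
  have M0: "M \<ge> 0" by (simp add: M_def)
  have Dbd: "norm (D n t) \<le> M * K ^ n * \<bar>t\<bar> ^ Suc n / fact (Suc n)" for n t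
  proof (induction n arbitrary: t)
    case 0
    have "D 0 t = Jint (\<lambda>s. F z0) t" by (simp add: D_def ZsS Zs0 P_def)
    also have "norm \<dots> \<le> M * \<bar>t\<bar> ^ Suc 0 / Suc 0"
      by (rule Jint_bound) (auto simp: M_def)
    finally show ?case by simp
  next
    case (Suc n)
    have "D (Suc n) t = Jint (\<lambda>s. F (Zs (Suc n) s)) t - Jint (\<lambda>s. F (Zs n s)) t"
      by (simp add: D_def ZsS[of "Suc n"] ZsS[of n] P_def)
    also have "\<dots> = Jint (\<lambda>s. F (Zs (Suc n) s) - F (Zs n s)) t"
      by (rule Jint_diff) (auto intro: compc cont)
    also have "norm \<dots> \<le> (M * K ^ Suc n / fact (Suc n)) * \<bar>t\<bar> ^ Suc (Suc n) / Suc (Suc n)"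
    proof (rule Jint_bound)
      show "continuous_on UNIV (\<lambda>s. F (Zs (Suc n) s) - F (Zs n s))"
        by (intro continuous_intros compc cont)
      show "0 \<le> M * K ^ Suc n / fact (Suc n)" using M0 K by simp
      fix s :: real
      have "norm (F (Zs (Suc n) s) - F (Zs n s)) \<le> K * norm (D n s)" unfolding D_def by (rule lip)
      also have "\<dots> \<le> K * (M * K ^ n * \<bar>s\<bar> ^ Suc n / fact (Suc n))"
        using Suc.IH[of s] K by (rule mult_left_mono)
      also have "\<dots> = M * K ^ Suc n / fact (Suc n) * \<bar>s\<bar> ^ Suc n" by (simp add: field_simps)
      finally show "norm (F (Zs (Suc n) s) - F (Zs n s)) \<le> M * K ^ Suc n / fact (Suc n) * \<bar>s\<bar> ^ Suc n" .
    qed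
    also have "\<dots> = M * K ^ Suc n * \<bar>t\<bar> ^ Suc (Suc n) / fact (Suc (Suc n))"
    proof -
      have f: "(fact (Suc (Suc n)) :: real) = real (Suc (Suc n)) * fact (Suc n)"
        by (rule fact_Suc)
      show ?thesis unfolding f by (simp add: field_simps del: fact_Suc of_nat_Suc)
    qed
    finally show ?case .
  qed
  have Zs_sum: "Zs n t = z0 + (\<Sum>k<n. D k t)" for n t
    by (induction n) (auto simp: Zs0 D_def)
  have summ: "summable (\<lambda>k. M * K ^ k * R ^ Suc k / fact (Suc k))" if R: "R \<ge> 0" for R
  proof (rule summable_comparison_test[OF _ summable_mult[OF summable_exp[of "K * R"], of "M * R"]])
    show "\<exists>N. \<forall>k\<ge>N. norm (M * K ^ k * R ^ Suc k / fact (Suc k)) \<le> M * R * (inverse (fact k) * (K * R) ^ k)"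
    proof (intro exI allI impI)
      fix k :: nat
      have "M * K ^ k * R ^ Suc k / fact (Suc k) \<le> M * K ^ k * R ^ Suc k / fact k"
        using M0 K R by (intro divide_left_mono) (auto simp: fact_mono)
      also have "\<dots> = M * R * (inverse (fact k) * (K * R) ^ k)"
        by (simp add: field_simps power_mult_distrib)
      finally show "norm (M * K ^ k * R ^ Suc k / fact (Suc k)) \<le> M * R * (inverse (fact k) * (K * R) ^ k)"
        using M0 K R by simp
    qed
  qed
  define Z where "Z t = z0 + (\<Sum>k. D k t)" for t
  have UZ: "uniform_limit {-R..R} Zs Z sequentially" if R: "R \<ge> 0" for R
  proof -
    have "uniform_limit {-R..R} (\<lambda>n t. \<Sum>k<n. D k t) (\<lambda>t. \<Sum>k. D k t) sequentially"
    proof (rule Weierstrass_m_test[OF _ summ[OF R]])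
      fix n t assume t: "t \<in> {-R..R}"
      have "norm (D n t) \<le> M * K ^ n * \<bar>t\<bar> ^ Suc n / fact (Suc n)" by (rule Dbd)
      also have "\<dots> \<le> M * K ^ n * R ^ Suc n / fact (Suc n)"
        using t M0 K by (intro divide_right_mono mult_left_mono power_mono) auto
      finally show "norm (D n t) \<le> M * K ^ n * R ^ Suc n / fact (Suc n)" .
    qed
    then have "uniform_limit {-R..R} (\<lambda>n t. z0 + (\<Sum>k<n. D k t)) (\<lambda>t. z0 + (\<Sum>k. D k t)) sequentially"
      by (intro uniform_limit_intros)
    moreover have "(\<lambda>n t. z0 + (\<Sum>k<n. D k t)) = Zs" by (intro ext) (simp only: Zs_sum)
    moreover have "(\<lambda>t. z0 + (\<Sum>k. D k t)) = Z" by (intro ext) (simp only: Z_def)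
    ultimately show ?thesis by simp
  qed
  have Zc: "continuous_on UNIV Z"
  proof (rule continuous_at_imp_continuous_on, intro ballI)
    fix s :: real
    define R where "R = \<bar>s\<bar> + 1"
    have "continuous_on {-R..R} Z"
    proof (rule uniform_limit_theorem[OF _ UZ])
      show "\<forall>\<^sub>F n in sequentially. continuous_on {-R..R} (Zs n)"
        by (intro always_eventually allI continuous_on_subset[OF cont]) simp
    qed (auto simp: R_def)
    moreover have "s \<in> interior {-R..R}" by (auto simp: R_def)
    ultimately show "isCont Z s" using continuous_on_interior by blast
  qed
  have FP: "Z t = z0 + Jint (\<lambda>s. F (Z s)) t" for t
  proof -
    define R where "R = \<bar>t\<bar>"
    have R: "R \<ge> 0" by (simp add: R_def)
    have "(\<lambda>n. Zs n t) \<longlonglongrightarrow> Z t"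
      by (rule tendsto_uniform_limitI[OF UZ[OF R]]) (auto simp: R_def)
    then have l1: "(\<lambda>n. Zs (Suc n) t) \<longlonglongrightarrow> Z t" by (rule LIMSEQ_Suc)
    have l2: "(\<lambda>n. Jint (\<lambda>s. F (Zs n s)) t) \<longlonglongrightarrow> Jint (\<lambda>s. F (Z s)) t"
    proof (rule LIMSEQ_I)
      fix e :: real assume e: "e > 0"
      define e' where "e' = e / (K * R + 1)"
      have "K * R \<ge> 0" using K R by simp
      then have e': "e' > 0" using e by (simp add: e'_def)
      obtain N where N: "\<And>n s. n \<ge> N \<Longrightarrow> s \<in> {-R..R} \<Longrightarrow> dist (Zs n s) (Z s) < e'"
        using uniform_limitD[OF UZ[OF R] e'] unfolding eventually_sequentially by blast
      show "\<exists>N. \<forall>n\<ge>N. norm (Jint (\<lambda>s. F (Zs n s)) t - Jint (\<lambda>s. F (Z s)) t) < e"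
      proof (intro exI allI impI)
        fix n assume n: "n \<ge> N"
        have "Jint (\<lambda>s. F (Zs n s)) t - Jint (\<lambda>s. F (Z s)) t = Jint (\<lambda>s. F (Zs n s) - F (Z s)) t"
          by (rule Jint_diff) (auto intro: compc cont Zc)
        also have "norm \<dots> \<le> (K * e') * \<bar>t\<bar> ^ Suc 0 / Suc 0"
        proof (rule Jint_bound)
          show "continuous_on UNIV (\<lambda>s. F (Zs n s) - F (Z s))"
            by (intro continuous_intros compc cont Zc)
          show "0 \<le> K * e'" using K e' by simp
          fix s :: real assume s: "\<bar>s\<bar> \<le> \<bar>t\<bar>"
          have "norm (F (Zs n s) - F (Z s)) \<le> K * norm (Zs n s - Z s)" by (rule lip)
          also have "\<dots> \<le> K * e'"
          proof (rule mult_left_mono[OF _ K])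
            have "s \<in> {-R..R}" using s by (auto simp: R_def)
            then show "norm (Zs n s - Z s) \<le> e'" using N[OF n, of s] by (simp add: dist_norm)
          qed
          finally show "norm (F (Zs n s) - F (Z s)) \<le> K * e' * \<bar>s\<bar> ^ 0" by simp
        qed
        also have "\<dots> = K * R * e'" by (simp add: R_def)
        also have "\<dots> < e"
        proof -
          have "K * R * e' < (K * R + 1) * e'" using e' by simp
          also have "\<dots> = e" using \<open>K * R \<ge> 0\<close> by (simp add: e'_def)
          finally show ?thesis .
        qed
        finally show "norm (Jint (\<lambda>s. F (Zs n s)) t - Jint (\<lambda>s. F (Z s)) t) < e" .
      qed
    qed
    have "(\<lambda>n. Zs (Suc n) t) \<longlonglongrightarrow> z0 + Jint (\<lambda>s. F (Z s)) t"
      unfolding ZsS P_def by (intro tendsto_intros l2)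
    with l1 show ?thesis by (rule LIMSEQ_unique)
  qed
  show ?thesis
  proof (intro exI conjI allI)
    show "Z 0 = z0" using FP[of 0] by (simp only: Jint_0 add_0_right)
    fix s
    have "((\<lambda>t. z0 + Jint (\<lambda>s. F (Z s)) t) has_vector_derivative 0 + F (Z s)) (at s)"
      by (intro derivative_intros Jint_deriv compc Zc)
    moreover have "(\<lambda>t. z0 + Jint (\<lambda>s. F (Z s)) t) = Z" by (rule ext) (rule FP[symmetric])
    ultimately show "(Z has_vector_derivative F (Z s)) (at s)" by simp
  qed
qed

lemma ode_gronwall:
  fixes F :: "'e::euclidean_space \<Rightarrow> 'e"
  assumes lip: "\<And>u v. norm (F u - F v) \<le> K * norm (u - v)" and K: "K \<ge> 0"
    and d1: "\<And>s. (Z1 has_vector_derivative F (Z1 s)) (at s)"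
    and d2: "\<And>s. (Z2 has_vector_derivative F (Z2 s)) (at s)"
    and t: "t \<ge> 0"
  shows "norm (Z1 t - Z2 t) \<le> norm (Z1 0 - Z2 0) * exp (K * t)"
proof -
  define W where "W s = Z1 s - Z2 s" for s
  define w where "w s = F (Z1 s) - F (Z2 s)" for s
  define \<phi> where "\<phi> s = exp (- (2 * K) * s) * (W s \<bullet> W s)" for s
  have dW: "(W has_derivative (\<lambda>h. h *\<^sub>R w s)) (at s)" for s
    using has_vector_derivative_diff[OF d1[of s] d2[of s]]
    unfolding has_vector_derivative_def W_def w_def by (simp add: fun_diff_def)
  have dWW: "((\<lambda>s. W s \<bullet> W s) has_real_derivative 2 * (W s \<bullet> w s)) (at s)" for s
    unfolding has_field_derivative_def
  proof (rule has_derivative_eq_rhs[OF has_derivative_inner[OF dW dW]])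
    show "(\<lambda>h. W s \<bullet> (h *\<^sub>R w s) + (h *\<^sub>R w s) \<bullet> W s) = (*) (2 * (W s \<bullet> w s))"
      by (auto simp: inner_commute algebra_simps)
  qed
  have de: "((\<lambda>s. exp (- (2 * K) * s)) has_real_derivative exp (- (2 * K) * s) * (- (2 * K))) (at s)" for s
    by (rule derivative_eq_intros refl | simp)+
  have dphi: "(\<phi> has_real_derivative exp (- (2 * K) * s) * (- (2 * K)) * (W s \<bullet> W s) + 2 * (W s \<bullet> w s) * exp (- (2 * K) * s)) (at s)" for s
    unfolding \<phi>_def[abs_def] by (rule DERIV_mult[OF de dWW])
  have neg: "exp (- (2 * K) * s) * (- (2 * K)) * (W s \<bullet> W s) + 2 * (W s \<bullet> w s) * exp (- (2 * K) * s) \<le> 0" for s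
  proof -
    have "W s \<bullet> w s \<le> norm (W s) * norm (w s)" by (rule norm_cauchy_schwarz)
    also have "\<dots> \<le> norm (W s) * (K * norm (W s))"
      by (intro mult_left_mono) (auto simp: w_def W_def lip)
    also have "\<dots> = K * (W s \<bullet> W s)" by (simp add: power2_norm_eq_inner[symmetric] power2_eq_square)
    finally have "W s \<bullet> w s \<le> K * (W s \<bullet> W s)" .
    then have "2 * (W s \<bullet> w s) - 2 * K * (W s \<bullet> W s) \<le> 0" by simp
    then have "exp (- (2 * K) * s) * (2 * (W s \<bullet> w s) - 2 * K * (W s \<bullet> W s)) \<le> 0"
      by (simp add: mult_nonneg_nonpos)
    then show ?thesis by (simp add: algebra_simps)
  qed
  have "\<phi> t \<le> \<phi> 0"
    by (rule DERIV_nonpos_imp_nonincreasing[OF t]) (use dphi neg in blast)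
  then have "exp (- (2 * K) * t) * (W t \<bullet> W t) \<le> W 0 \<bullet> W 0" by (simp add: \<phi>_def)
  then have "exp (2 * K * t) * (exp (- (2 * K) * t) * (W t \<bullet> W t)) \<le> exp (2 * K * t) * (W 0 \<bullet> W 0)"
    by (intro mult_left_mono) auto
  then have "W t \<bullet> W t \<le> exp (2 * K * t) * (W 0 \<bullet> W 0)"
    by (simp add: mult.assoc[symmetric] exp_add[symmetric])
  moreover have "W t \<bullet> W t = (norm (W t))\<^sup>2" by (simp add: power2_norm_eq_inner)
  moreover have "exp (2 * K * t) * (W 0 \<bullet> W 0) = (norm (W 0) * exp (K * t))\<^sup>2"
  proof -
    have "exp (2 * K * t) = exp (K * t) * exp (K * t)" by (simp add: exp_add[symmetric])
    then show ?thesis by (simp add: power2_norm_eq_inner[symmetric] power2_eq_square)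
  qed
  ultimately have "(norm (W t))\<^sup>2 \<le> (norm (W 0) * exp (K * t))\<^sup>2" by simp
  then show ?thesis unfolding W_def by (rule power2_le_imp_le) simp
qed




lemma hvd_fst:
  assumes "(Z has_vector_derivative z') F"
  shows "((\<lambda>s. fst (Z s)) has_vector_derivative fst z') F"
  using has_derivative_fst[OF assms[unfolded has_vector_derivative_def]]
  unfolding has_vector_derivative_def by simp

lemma hvd_snd:
  assumes "(Z has_vector_derivative z') F"
  shows "((\<lambda>s. snd (Z s)) has_vector_derivative snd z') F"
  using has_derivative_snd[OF assms[unfolded has_vector_derivative_def]]
  unfolding has_vector_derivative_def by simp

lemma ham_flow_facts:
  fixes G :: "'a::euclidean_space \<Rightarrow> 'a" and L :: real
  assumes Glip: "\<And>a b. norm (G a - G b) \<le> L * norm (a - b)" and L: "L \<ge> 0" and T: "T \<ge> 0"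
  shows "continuous_on UNIV (ham_flow_pos G T y)" 
proof -
  define F :: "'a \<times> 'a \<Rightarrow> 'a \<times> 'a" where "F p = (snd p, - G (fst p))" for p
  define K where "K = 1 + L"
  have K: "K \<ge> 0" using L by (simp add: K_def)
  have Flip: "norm (F p - F q) \<le> K * norm (p - q)" for p q
  proof -
    have "F p - F q = (snd p - snd q, - (G (fst p) - G (fst q)))" by (simp add: F_def)
    then have "norm (F p - F q) \<le> norm (snd p - snd q) + norm (G (fst p) - G (fst q))"
      using norm_Pair_le[of "snd p - snd q" "- (G (fst p) - G (fst q))"] by (simp add: norm_minus_commute)
    also have "\<dots> \<le> norm (p - q) + L * norm (fst p - fst q)"
    proof (rule add_mono)
      have "norm (snd (p - q)) \<le> norm (fst (p - q), snd (p - q))" by (rule norm_snd_le)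
      then show "norm (snd p - snd q) \<le> norm (p - q)" using prod_eq_iff[of "(fst p - fst q, snd p - snd q)" "p - q"] by simp
    qed (rule Glip)
    also have "\<dots> \<le> norm (p - q) + L * norm (p - q)"
    proof (intro add_left_mono mult_left_mono L)
      have "norm (fst (p - q)) \<le> norm (fst (p - q), snd (p - q))" by (rule norm_fst_le)
      then show "norm (fst p - fst q) \<le> norm (p - q)" using prod_eq_iff[of "(fst p - fst q, snd p - snd q)" "p - q"] by simp
    qed
    finally show ?thesis by (simp add: K_def algebra_simps)
  qed
  define Sol where "Sol x0 v0 X \<longleftrightarrow> (\<exists>V. X 0 = x0 \<and> V 0 = v0 \<and>
        (\<forall>s. (X has_vector_derivative V s) (at s) \<and> (V has_vector_derivative - G (X s)) (at s)))"
    for x0 v0 and X :: "real \<Rightarrow> 'a"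
  have ex: "\<exists>X. Sol x0 v0 X" for x0 v0
  proof -
    obtain Z where Z: "Z 0 = (x0, v0)" "\<And>s. (Z has_vector_derivative F (Z s)) (at s)"
      using ode_exists[OF Flip K, of "(x0, v0)"] by blast
    show ?thesis unfolding Sol_def
    proof (intro exI conjI allI)
      show "fst (Z 0) = x0" "snd (Z 0) = v0" using Z(1) by simp_all
      fix s
      show "((\<lambda>s. fst (Z s)) has_vector_derivative snd (Z s)) (at s)"
        using hvd_fst[OF Z(2)[of s]] by (simp add: F_def)
      show "((\<lambda>s. snd (Z s)) has_vector_derivative - G (fst (Z s))) (at s)"
        using hvd_snd[OF Z(2)[of s]] by (simp add: F_def)
    qed
  qed
  have hf: "ham_flow_pos G t x0 v0 = (SOME X. Sol x0 v0 X) t" for t x0 v0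
    unfolding ham_flow_pos_def Sol_def ..
  have sol: "Sol x0 v0 (SOME X. Sol x0 v0 X)" for x0 v0 by (rule someI_ex[OF ex])
  have lipT: "norm (ham_flow_pos G T y v1 - ham_flow_pos G T y v2) \<le> exp (K * T) * norm (v1 - v2)" 
    if T: "T \<ge> 0" for v1 v2
  proof -
    obtain V1 where V1: "(SOME X. Sol y v1 X) 0 = y" "V1 0 = v1"
      "\<And>s. ((SOME X. Sol y v1 X) has_vector_derivative V1 s) (at s)"
      "\<And>s. (V1 has_vector_derivative - G ((SOME X. Sol y v1 X) s)) (at s)"
      using sol[of y v1] unfolding Sol_def by blast
    obtain V2 where V2: "(SOME X. Sol y v2 X) 0 = y" "V2 0 = v2"
      "\<And>s. ((SOME X. Sol y v2 X) has_vector_derivative V2 s) (at s)"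
      "\<And>s. (V2 has_vector_derivative - G ((SOME X. Sol y v2 X) s)) (at s)"
      using sol[of y v2] unfolding Sol_def by blast
    define X1 where "X1 = (SOME X. Sol y v1 X)"
    define X2 where "X2 = (SOME X. Sol y v2 X)"
    have d1: "((\<lambda>s. (X1 s, V1 s)) has_vector_derivative F (X1 s, V1 s)) (at s)" for s
      using has_vector_derivative_Pair[OF V1(3)[of s] V1(4)[of s]] by (simp add: F_def X1_def)
    have d2: "((\<lambda>s. (X2 s, V2 s)) has_vector_derivative F (X2 s, V2 s)) (at s)" for s
      using has_vector_derivative_Pair[OF V2(3)[of s] V2(4)[of s]] by (simp add: F_def X2_def)
    have g: "norm ((X1 T, V1 T) - (X2 T, V2 T)) \<le> norm ((X1 0, V1 0) - (X2 0, V2 0)) * exp (K * T)"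
      by (rule ode_gronwall[OF Flip K d1 d2 T])
    have z: "(X1 0, V1 0) - (X2 0, V2 0) = (0, v1 - v2)"
      using V1 V2 by (simp add: X1_def X2_def)
    have nz: "norm ((0::'a), v1 - v2) = norm (v1 - v2)" by (simp add: norm_Pair)
    have f: "norm (X1 T - X2 T) \<le> norm ((X1 T, V1 T) - (X2 T, V2 T))"
    proof -
      have "norm (fst ((X1 T, V1 T) - (X2 T, V2 T))) \<le> norm (fst ((X1 T, V1 T) - (X2 T, V2 T)), snd ((X1 T, V1 T) - (X2 T, V2 T)))"
        by (rule norm_fst_le)
      then have "norm (fst ((X1 T, V1 T) - (X2 T, V2 T))) \<le> norm ((X1 T, V1 T) - (X2 T, V2 T))"
        unfolding prod.collapse .
      then show ?thesis by simp
    qed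
    have "norm (X1 T - X2 T) \<le> exp (K * T) * norm (v1 - v2)"
      using f g unfolding z nz by (simp add: mult.commute)
    then show ?thesis by (simp only: hf X1_def X2_def)
  qed
  show ?thesis
    by (rule lip_cont[of _ "exp (K * T)"]) (use lipT[OF T] in \<open>auto simp: mult.commute\<close>)
qed

theorem lemma3:
  fixes f :: "'a::euclidean_space \<Rightarrow> real" and G :: "'a \<Rightarrow> 'a"
    and H :: "'a \<Rightarrow> 'a \<Rightarrow>\<^sub>L 'a" and \<Phi> :: "'a \<Rightarrow> 'a"
    and x y :: 'a and L T h :: real
  assumes grad: "\<forall>z. (f has_derivative (\<lambda>u. G z \<bullet> u)) (at z)"
    and hess: "\<forall>z. (G has_derivative blinfun_apply (H z)) (at z)"
    and C2: "continuous_on UNIV H"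
    and hess_bd: "\<forall>z. norm (H z) \<le> L"
    and T_pos: "T > 0"
    and LT: "L * T^2 \<le> 2 / 5 * pi^2"
    and h_nonneg: "h \<ge> 0"
    and T_h: "h = 0 \<or> (\<exists>N::nat. real N * h = T)"
    and \<Phi>_meas: "\<Phi> \<in> borel_measurable borel"
    and coupling: "\<forall>v. leapfrog_pos G T h x v = ham_flow_pos G T y (\<Phi> v)"
  shows "KL_div (distr std_gaussian borel (leapfrog_pos G T h x))
                (distr std_gaussian borel (ham_flow_pos G T y))
           \<le> KL_div (distr std_gaussian borel \<Phi>) std_gaussian
         \<and> (\<forall>q>1. renyi_div q (distr std_gaussian borel (leapfrog_pos G T h x))
                              (distr std_gaussian borel (ham_flow_pos G T y))
                   \<le> renyi_div q (distr std_gaussian borel \<Phi>) std_gaussian)"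
proof -
  have L: "L \<ge> 0" using hess_bd norm_ge_zero order_trans by blast
  have Glip: "norm (G a - G b) \<le> L * norm (a - b)" for a b
  proof (rule differentiable_bound[of UNIV G "\<lambda>z. blinfun_apply (H z)"])
    show "convex (UNIV :: 'a set)" by simp
    fix z :: 'a
    show "(G has_derivative blinfun_apply (H z)) (at z within UNIV)" using hess by simp
    show "onorm (blinfun_apply (H z)) \<le> L" using hess_bd by (simp add: norm_blinfun.rep_eq[symmetric])
  qed auto
  define \<psi> where "\<psi> = ham_flow_pos G T y"
  have psic: "continuous_on UNIV \<psi>"
    unfolding \<psi>_def by (rule ham_flow_facts[OF Glip L]) (use T_pos in simp)
  have psim: "\<psi> \<in> measurable (std_gaussian :: 'a measure) borel"
    using borel_measurable_continuous_onI[OF psic]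
    by (simp only: measurable_cong_sets[OF sets_std_gaussian refl])
  have psim': "\<psi> \<in> measurable borel borel"
    using borel_measurable_continuous_onI[OF psic] .
  have Phim: "\<Phi> \<in> measurable (std_gaussian :: 'a measure) borel"
    using \<Phi>_meas by (simp only: measurable_cong_sets[OF sets_std_gaussian refl])
  have lf: "leapfrog_pos G T h x = \<psi> \<circ> \<Phi>"
    using coupling by (auto simp: \<psi>_def)
  define N where "N = distr (std_gaussian :: 'a measure) borel \<Phi>"
  have finM: "finite_measure (std_gaussian :: 'a measure)" by (rule std_gaussian_finite)
  have finN: "finite_measure N" unfolding N_def
    by (rule finite_measure.finite_measure_distr[OF finM Phim])
  have setsN: "sets N = sets (std_gaussian :: 'a measure)" by (simp add: N_def)
  have eq1: "distr std_gaussian borel (leapfrog_pos G T h x) = distr N borel \<psi>"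
    unfolding lf N_def by (rule distr_distr[symmetric, OF psim' Phim])
  have eq2: "distr std_gaussian borel (ham_flow_pos G T y) = distr std_gaussian borel \<psi>"
    by (simp add: \<psi>_def)
  show ?thesis
    unfolding eq1 eq2 N_def[symmetric]
    using KL_dpi[OF finM finN setsN psim] renyi_dpi[OF finM finN setsN psim] by blast
qed



end
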